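(* Let $n\ge 1$ and $A \in \mathrm{SL}(n,\mathbb{C})$. Then $A$ is $c$-reversible if and only if $A$ is strongly $c$-reversible.
   Context: For $g\in\mathrm{SL}(n,\mathbb{C})$, $\overline{g}$ denotes the entrywise complex conjugate matrix. An element $g \in \mathrm{SL}(n,\mathbb{C})$ is called $c$-reversible if there exists $h\in\mathrm{SL}(n,\mathbb{C})$ with $hgh^{-1}=\overline{g}^{-1}$. If moreover such an $h$ can be chosen with $h\overline{h}=I$, then $g$ is called strongly $c$-reversible (and such $h$ is called an involutory $c$-symmetry). *)

theory Defs
  imports "HOL-Analysis.Analysis"
begin

text \<open>n x n complex matrices are modelled as complex^'n^'n, with n = CARD('n) \<ge> 1.\<close>

definition SL :: "(complex^'n^'n) set" where
  "SL = {A. det A = 1}"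

definition conj_mat :: "complex^'n^'n \<Rightarrow> complex^'n^'n" where
  "conj_mat A = (\<chi> i j. cnj (A $ i $ j))"

definition c_reversible :: "complex^'n^'n \<Rightarrow> bool" where
  "c_reversible g \<longleftrightarrow> (\<exists>h \<in> SL. h ** g ** matrix_inv h = matrix_inv (conj_mat g))"

definition strongly_c_reversible :: "complex^'n^'n \<Rightarrow> bool" where
  "strongly_c_reversible g \<longleftrightarrow>
     (\<exists>h \<in> SL. h ** g ** matrix_inv h = matrix_inv (conj_mat g) \<and> h ** conj_mat h = mat 1)"

end

theory Submission
  imports Defs "Jordan_Normal_Form.Jordan_Normal_Form_Existence" "Jordan_Normal_Form.Jordan_Normal_Form_Uniqueness"
begin

definition cm :: "complex mat \<Rightarrow> complex mat" where "cm A = map_mat cnj A"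

lemma cm_carrier[simp]: "A \<in> carrier_mat n m \<Longrightarrow> cm A \<in> carrier_mat n m"
  unfolding cm_def by auto
lemma cm_dim[simp]: "dim_row (cm A) = dim_row A" "dim_col (cm A) = dim_col A"
  unfolding cm_def by auto
lemma cm_index[simp]: "i < dim_row A \<Longrightarrow> j < dim_col A \<Longrightarrow> cm A $$ (i,j) = cnj (A $$ (i,j))"
  unfolding cm_def by auto
lemma cm_cm[simp]: "cm (cm A) = A"
  by (rule eq_matI, auto)
lemma cm_mult: assumes A: "A \<in> carrier_mat nr n" and B: "B \<in> carrier_mat n nc"
  shows "cm (A * B) = cm A * cm B"
proof (rule eq_matI)
  fix i j assume i: "i < dim_row (cm A * cm B)" and j: "j < dim_col (cm A * cm B)"
  have "cm (A * B) $$ (i,j) = cnj (row A i \<bullet> col B j)" using i j A B by simp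
  also have "\<dots> = row (cm A) i \<bullet> col (cm B) j"
    using i j A B by (simp add: scalar_prod_def cnj_sum)
  also have "\<dots> = (cm A * cm B) $$ (i,j)" using i j A B by simp
  finally show "cm (A * B) $$ (i,j) = (cm A * cm B) $$ (i,j)" .
qed auto
lemma cm_one[simp]: "cm (1\<^sub>m n) = 1\<^sub>m n"
  by (rule eq_matI, auto)
lemma cm_zero[simp]: "cm (0\<^sub>m n m) = 0\<^sub>m n m"
  by (rule eq_matI, auto)
lemma cm_smult: "cm (c \<cdot>\<^sub>m A) = cnj c \<cdot>\<^sub>m cm A"
  by (rule eq_matI, auto)
lemma cm_add: assumes "A \<in> carrier_mat n m" "B \<in> carrier_mat n m"
  shows "cm (A + B) = cm A + cm B"
  using assms by (intro eq_matI, auto)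
lemma cm_jordan_block: "cm (jordan_block k a) = jordan_block k (cnj a)"
  by (rule eq_matI, auto)

lemma cm_four_block: assumes c: "A \<in> carrier_mat nr1 nc1" "B \<in> carrier_mat nr1 nc2"
  "C \<in> carrier_mat nr2 nc1" "D \<in> carrier_mat nr2 nc2"
  shows "cm (four_block_mat A B C D) = four_block_mat (cm A) (cm B) (cm C) (cm D)"
  unfolding cm_def by (rule map_four_block_mat[OF c])

lemma cm_diag_jb: "cm (diag_block_mat (map (\<lambda>(n,a). jordan_block n a) as)) = 
   diag_block_mat (map (\<lambda>(n,a). jordan_block n (cnj a)) as)"
proof (induct as)
  case Nil
  then show ?case by (auto intro!: eq_matI)
next
  case (Cons a as)
  obtain k e where a: "a = (k,e)" by force
  let ?B = "diag_block_mat (map (\<lambda>(n,a). jordan_block n a) as)"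
  have B: "?B \<in> carrier_mat (dim_row ?B) (dim_col ?B)" by auto
  show ?case unfolding a
    apply (simp add: Let_def)
    apply (subst cm_four_block[OF jordan_block_carrier zero_carrier_mat zero_carrier_mat B])
    apply (simp add: cm_jordan_block Cons)
    apply (simp add: Cons[symmetric])
    done
qed

lemma cm_jordan_matrix: "cm (jordan_matrix as) = jordan_matrix (map (\<lambda>(k,e). (k, cnj e)) as)"
proof -
  have "map (\<lambda>(x,y). jordan_block x y) (map (\<lambda>(k,e). (k, cnj e)) as) = map (\<lambda>(n,a). jordan_block n (cnj a)) as"
    by (induct as) auto
  then show ?thesis unfolding jordan_matrix_def cm_diag_jb by (simp only:)
qed

lemma similar_mat_cm: assumes "similar_mat A B" shows "similar_mat (cm A) (cm B)"
proof -
  from similar_matD[OF assms] obtain n P Q where 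
    c: "{A,B,P,Q} \<subseteq> carrier_mat n n" and PQ: "P * Q = 1\<^sub>m n" and QP: "Q * P = 1\<^sub>m n" and AB: "A = P * B * Q"
    by blast
  from c have A: "A \<in> carrier_mat n n" and B: "B \<in> carrier_mat n n" and P: "P \<in> carrier_mat n n" and Q: "Q \<in> carrier_mat n n" by auto
  have 1: "cm P * cm Q = 1\<^sub>m n" using cm_mult[OF P Q] PQ by simp
  have 2: "cm Q * cm P = 1\<^sub>m n" using cm_mult[OF Q P] QP by simp
  have 3: "cm A = cm P * cm B * cm Q" unfolding AB
    using cm_mult[OF mult_carrier_mat[OF P B] Q] cm_mult[OF P B] by simp
  have "similar_mat_wit (cm A) (cm B) (cm P) (cm Q)"
    unfolding similar_mat_wit_def Let_def using A B P Q 1 2 3 by auto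
  then show ?thesis unfolding similar_mat_def by blast
qed

lemma inv_exists: assumes A: "(A :: 'a :: field mat) \<in> carrier_mat n n" and d: "det A \<noteq> 0"
  shows "\<exists>B. B \<in> carrier_mat n n \<and> A * B = 1\<^sub>m n \<and> B * A = 1\<^sub>m n"
proof -
  from det_non_zero_imp_unit[OF A d, unfolded Units_def, of "()"]
  obtain B where B: "B \<in> carrier_mat n n" and BA: "B * A = 1\<^sub>m n" and AB: "A * B = 1\<^sub>m n"
    by (auto simp: ring_mat_def)
  then show ?thesis by blast
qed

lemma pow_comm_right: assumes A: "A \<in> carrier_mat n n" and B: "B \<in> carrier_mat n n"
  and AB: "A * B = B * A"
  shows "A ^\<^sub>m k * B = B * A ^\<^sub>m k"
proof (induct k)
  case 0
  then show ?case using A B by simp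
next
  case (Suc k)
  have Ak: "A ^\<^sub>m k \<in> carrier_mat n n" using A by simp
  have "A ^\<^sub>m Suc k * B = A ^\<^sub>m k * (A * B)" using assoc_mult_mat[OF Ak A B] by simp
  also have "\<dots> = (A ^\<^sub>m k * B) * A" unfolding AB using assoc_mult_mat[OF Ak B A] by simp
  also have "\<dots> = B * A ^\<^sub>m Suc k" unfolding Suc using assoc_mult_mat[OF B Ak A] by simp
  finally show ?case .
qed

lemma pow_mult_comm: assumes A: "A \<in> carrier_mat n n" and B: "B \<in> carrier_mat n n"
  and AB: "A * B = B * A"
  shows "(A * B) ^\<^sub>m k = A ^\<^sub>m k * B ^\<^sub>m k"
proof (induct k)
  case 0
  then show ?case using A B by simp
next
  case (Suc k)
  have Ak: "A ^\<^sub>m k \<in> carrier_mat n n" using A by simp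
  have Bk: "B ^\<^sub>m k \<in> carrier_mat n n" using B by simp
  have AB': "A * B \<in> carrier_mat n n" using A B by simp
  have "(A * B) ^\<^sub>m Suc k = (A ^\<^sub>m k * B ^\<^sub>m k) * (A * B)" unfolding pow_mat.simps Suc ..
  also have "\<dots> = A ^\<^sub>m k * (B ^\<^sub>m k * (A * B))" using assoc_mult_mat[OF Ak Bk AB'] .
  also have "B ^\<^sub>m k * (A * B) = (B ^\<^sub>m k * A) * B" using assoc_mult_mat[OF Bk A B] by simp
  also have "B ^\<^sub>m k * A = A * B ^\<^sub>m k" using pow_comm_right[OF B A AB[symmetric]] .
  also have "(A * B ^\<^sub>m k) * B = A * (B ^\<^sub>m k * B)" using assoc_mult_mat[OF A Bk B] .
  also have "A ^\<^sub>m k * (A * (B ^\<^sub>m k * B)) = (A ^\<^sub>m k * A) * (B ^\<^sub>m k * B)"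
    using assoc_mult_mat[OF Ak A mult_carrier_mat[OF Bk B]] by simp
  also have "\<dots> = A ^\<^sub>m Suc k * B ^\<^sub>m Suc k" by simp
  finally show ?case .
qed

lemma pow_one_mat: "(1\<^sub>m n :: 'a :: semiring_1 mat) ^\<^sub>m k = 1\<^sub>m n"
  by (induct k) auto

lemma pow_inverse: assumes A: "A \<in> carrier_mat n n" and B: "B \<in> carrier_mat n n"
  and AB: "A * B = 1\<^sub>m n" and BA: "B * A = 1\<^sub>m n"
  shows "A ^\<^sub>m k * B ^\<^sub>m k = 1\<^sub>m n"
  using pow_mult_comm[OF A B, of k] AB BA pow_one_mat by metis

lemma kernel_dim_left: assumes M: "(M :: 'a :: field mat) \<in> carrier_mat n m"
  and B: "B \<in> carrier_mat n n" and C: "C \<in> carrier_mat n n" and CB: "C * B = 1\<^sub>m n"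
  shows "kernel_dim (B * M) = kernel_dim M"
proof -
  have d: "dim_col (B * M) = m" "dim_col M = m" using B M by auto
  show ?thesis unfolding kernel_dim_def d mat_kernel_mult_eq[OF M B C CB] by simp
qed

lemma kernel_dim_right: assumes M: "(M :: 'a :: field mat) \<in> carrier_mat n n"
  and B: "B \<in> carrier_mat n n" and C: "C \<in> carrier_mat n n" and BC: "B * C = 1\<^sub>m n"
  shows "kernel_dim (M * B) = kernel_dim M"
proof -
  have d: "dim_col (M * B) = n" "dim_col M = n" using B M by auto
  show ?thesis unfolding kernel_dim_def d by (rule mat_kernel_dim_mult_eq_right[OF M B C BC])
qed

lemma kernel_dim_smult: assumes M: "(M :: 'a :: field mat) \<in> carrier_mat n m" and c: "c \<noteq> 0"
  shows "kernel_dim (c \<cdot>\<^sub>m M) = kernel_dim M"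
proof -
  have "(c \<cdot>\<^sub>m 1\<^sub>m n) * M = c \<cdot>\<^sub>m (1\<^sub>m n * M)" by (rule mult_smult_assoc_mat[OF one_carrier_mat M])
  then have "c \<cdot>\<^sub>m M = (c \<cdot>\<^sub>m 1\<^sub>m n) * M" using left_mult_one_mat[OF M] by simp
  moreover have "(inverse c \<cdot>\<^sub>m 1\<^sub>m n) * (c \<cdot>\<^sub>m 1\<^sub>m n) = 1\<^sub>m n"
    using c by (auto intro!: eq_matI)
  ultimately show ?thesis using kernel_dim_left[OF M, of "c \<cdot>\<^sub>m 1\<^sub>m n" "inverse c \<cdot>\<^sub>m 1\<^sub>m n"] by simp
qed

lemma kernel_dim_invertible: assumes M: "(M :: 'a :: field mat) \<in> carrier_mat n n"
  and B: "B \<in> carrier_mat n n" and BM: "B * M = 1\<^sub>m n"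
  shows "kernel_dim M = 0"
proof -
  have "kernel_dim (M * 1\<^sub>m n) = kernel_dim (1\<^sub>m n :: 'a mat)"
    by (rule kernel_dim_left[OF one_carrier_mat M B BM])
  moreover have "kernel_dim (1\<^sub>m n :: 'a mat) = 0" unfolding kernel_dim_def using kernel_one_mat(1)[of n] by simp
  ultimately show ?thesis using M by simp
qed

lemma jordan_matrix_single: "jordan_matrix [(k,a)] = jordan_block k a"
  unfolding jordan_matrix_def by (simp del: diag_block_mat.simps)

lemma dgs_jordan_block: "dim_gen_eigenspace (jordan_block k a) ev j = (if a = ev then min j k else 0)"
  using dim_gen_eigenspace_jordan_matrix[of "[(k,a)]" ev j] unfolding jordan_matrix_single by auto

lemma dgs_inverse: assumes X: "(X :: 'a :: field mat) \<in> carrier_mat n n" and Z: "Z \<in> carrier_mat n n"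
  and XZ: "X * Z = 1\<^sub>m n" and ZX: "Z * X = 1\<^sub>m n" and nu: "nu \<noteq> 0"
  shows "dim_gen_eigenspace Z nu j = dim_gen_eigenspace X (inverse nu) j"
proof -
  define M where "M = char_matrix X (inverse nu)"
  define W where "W = (- nu) \<cdot>\<^sub>m Z"
  define W' where "W' = (- inverse nu) \<cdot>\<^sub>m X"
  have M: "M \<in> carrier_mat n n" unfolding M_def using X by simp
  have W: "W \<in> carrier_mat n n" unfolding W_def using Z by simp
  have W': "W' \<in> carrier_mat n n" unfolding W'_def using X by simp
  have WW': "W * W' = 1\<^sub>m n"
  proof -
    have "W * W' = (- nu) \<cdot>\<^sub>m (Z * ((- inverse nu) \<cdot>\<^sub>m X))" unfolding W_def W'_def
      by (rule mult_smult_assoc_mat[OF Z smult_carrier_mat[OF X]])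
    also have "Z * ((- inverse nu) \<cdot>\<^sub>m X) = (- inverse nu) \<cdot>\<^sub>m (Z * X)" by (rule mult_smult_distrib[OF Z X])
    finally show ?thesis unfolding ZX using nu by (auto intro!: eq_matI)
  qed
  have W'W: "W' * W = 1\<^sub>m n"
  proof -
    have "W' * W = (- inverse nu) \<cdot>\<^sub>m (X * ((- nu) \<cdot>\<^sub>m Z))" unfolding W_def W'_def
      by (rule mult_smult_assoc_mat[OF X smult_carrier_mat[OF Z]])
    also have "X * ((- nu) \<cdot>\<^sub>m Z) = (- nu) \<cdot>\<^sub>m (X * Z)" by (rule mult_smult_distrib[OF X Z])
    finally show ?thesis unfolding XZ using nu by (auto intro!: eq_matI)
  qed
  have M_eq: "M = X + (- inverse nu) \<cdot>\<^sub>m 1\<^sub>m n" unfolding M_def char_matrix_def using X by simp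
  have ZM: "Z * M = 1\<^sub>m n + (- inverse nu) \<cdot>\<^sub>m Z" unfolding M_eq using X Z XZ ZX
    by (simp add: mult_add_distrib_mat[OF Z X smult_carrier_mat[OF one_carrier_mat]] mult_smult_distrib[OF Z one_carrier_mat] right_mult_one_mat[OF Z])
  have MZ: "M * Z = 1\<^sub>m n + (- inverse nu) \<cdot>\<^sub>m Z" unfolding M_eq using X Z ZX XZ
    by (simp add: add_mult_distrib_mat[OF X smult_carrier_mat[OF one_carrier_mat] Z] mult_smult_assoc_mat[OF one_carrier_mat Z] left_mult_one_mat[OF Z])
  have WM: "W * M = M * W" unfolding W_def using Z M ZM MZ
    by (simp add: mult_smult_assoc_mat mult_smult_distrib)
  have char: "char_matrix Z nu = W * M" unfolding W_def
  proof -
    have "(- nu) \<cdot>\<^sub>m Z * M = (- nu) \<cdot>\<^sub>m (Z * M)" using Z M by (simp add: mult_smult_assoc_mat)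
    also have "\<dots> = (- nu) \<cdot>\<^sub>m 1\<^sub>m n + Z" unfolding ZM using Z nu
      by (auto intro!: eq_matI simp: field_simps)
    also have "\<dots> = char_matrix Z nu" unfolding char_matrix_def using Z
      by (auto intro!: eq_matI)
    finally show "char_matrix Z nu = (- nu) \<cdot>\<^sub>m Z * M" by simp
  qed
  have "dim_gen_eigenspace Z nu j = kernel_dim ((W * M) ^\<^sub>m j)"
    unfolding dim_gen_eigenspace_def char ..
  also have "\<dots> = kernel_dim (W ^\<^sub>m j * M ^\<^sub>m j)" unfolding pow_mult_comm[OF W M WM] ..
  also have "\<dots> = kernel_dim (M ^\<^sub>m j)"
    by (rule kernel_dim_left[OF pow_carrier_mat[OF M] pow_carrier_mat[OF W] pow_carrier_mat[OF W'] pow_inverse[OF W' W W'W WW']])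
  also have "\<dots> = dim_gen_eigenspace X (inverse nu) j" unfolding dim_gen_eigenspace_def M_def ..
  finally show ?thesis .
qed

lemma massoc[simp]: "dim_col (A :: 'a :: semiring_0 mat) = dim_row B \<Longrightarrow> dim_col B = dim_row C \<Longrightarrow> (A * B) * C = A * (B * C)"
  by (rule assoc_mult_mat[of A "dim_row A" "dim_col A" B "dim_col B" C "dim_col C"]) auto

definition dg :: "'a :: zero mat \<Rightarrow> 'a mat \<Rightarrow> 'a mat" where
  "dg A B = four_block_mat A (0\<^sub>m (dim_row A) (dim_col B)) (0\<^sub>m (dim_row B) (dim_col A)) B"

lemma dg_carrier[simp]: "A \<in> carrier_mat n n \<Longrightarrow> B \<in> carrier_mat m m \<Longrightarrow> dg A B \<in> carrier_mat (n+m) (n+m)"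
  unfolding dg_def by auto

lemma dg_dim[simp]: "dim_row (dg A B) = dim_row A + dim_row B" "dim_col (dg A B) = dim_col A + dim_col B"
  unfolding dg_def by auto

lemma dg_assoc: "dg A (dg B C) = dg (dg A B) C"
  unfolding dg_def using assoc_four_block_mat[of A B C] by simp

lemma jordan_matrix_Cons: "jordan_matrix ((k,e) # as) = dg (jordan_block k e) (jordan_matrix as)"
  unfolding jordan_matrix_def dg_def by (simp add: Let_def)

lemma dg_mult: assumes A1: "A1 \<in> carrier_mat n n" and A2: "A2 \<in> carrier_mat m m" 
  and B1: "B1 \<in> carrier_mat n n" and B2: "B2 \<in> carrier_mat m m"
  shows "dg A1 A2 * dg B1 B2 = dg (A1 * B1) (A2 * B2)"
proof -
  have "dg A1 A2 * dg B1 B2 = four_block_mat (A1 * B1 + 0\<^sub>m n m * 0\<^sub>m m n) (A1 * 0\<^sub>m n m + 0\<^sub>m n m * B2)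
    (0\<^sub>m m n * B1 + A2 * 0\<^sub>m m n) (0\<^sub>m m n * 0\<^sub>m n m + A2 * B2)"
    unfolding dg_def using A1 A2 B1 B2 
    by (simp del: left_mult_zero_mat' right_mult_zero_mat' add: mult_four_block_mat[OF A1 _ _ A2 B1 _ _ B2])
  also have "\<dots> = dg (A1 * B1) (A2 * B2)" unfolding dg_def using A1 A2 B1 B2 by simp
  finally show ?thesis .
qed

lemma cm_dg: assumes A: "A \<in> carrier_mat n n" and B: "B \<in> carrier_mat m m"
  shows "cm (dg A B) = dg (cm A) (cm B)"
  unfolding dg_def using A B by (simp add: cm_four_block[OF A _ _ B])

lemma dg_one: "dg (1\<^sub>m n) (1\<^sub>m m) = 1\<^sub>m (n + m)"
  unfolding dg_def by simp

lemma dg_cong: assumes "similar_mat A A'" "similar_mat B B'"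
  shows "similar_mat (dg A B) (dg A' B')"
proof -
  from similar_matD[OF assms(1)] obtain n where A: "A \<in> carrier_mat n n" "A' \<in> carrier_mat n n" by auto
  from similar_matD[OF assms(2)] obtain m where B: "B \<in> carrier_mat m m" "B' \<in> carrier_mat m m" by auto
  show ?thesis unfolding dg_def using similar_mat_four_block_0_0[OF assms A(1) B(1)] A B by simp
qed

lemmas [trans] = similar_mat_trans

lemma dg_swap: fixes X Y :: "'a :: comm_ring_1 mat" assumes X: "X \<in> carrier_mat n n" and Y: "Y \<in> carrier_mat m m"
  shows "similar_mat (dg X Y) (dg Y X)"
proof -
  define P where "P = (four_block_mat (0\<^sub>m n m) (1\<^sub>m n) (1\<^sub>m m) (0\<^sub>m m n) :: 'a mat)"
  define Q where "Q = (four_block_mat (0\<^sub>m m n) (1\<^sub>m m) (1\<^sub>m n) (0\<^sub>m n m) :: 'a mat)"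
  have P: "P \<in> carrier_mat (n+m) (n+m)" unfolding P_def by (rule carrier_matI, auto)
  have Q: "Q \<in> carrier_mat (n+m) (n+m)" unfolding Q_def by (rule carrier_matI, auto)
  have PQ: "P * Q = 1\<^sub>m (n+m)" unfolding P_def Q_def
    by (subst mult_four_block_mat[of _ n m _ n _ m _ _ n _ m], auto)
  have QP: "Q * P = 1\<^sub>m (n+m)" unfolding P_def Q_def
    by (subst mult_four_block_mat[of _ m n _ m _ n _ _ m _ n], auto simp: add.commute)
  have "P * dg Y X = four_block_mat (0\<^sub>m n m) X Y (0\<^sub>m m n)" unfolding P_def dg_def using X Y
    by (subst mult_four_block_mat[of _ n m _ n _ m _ _ m _ n], auto)
  then have "P * dg Y X * Q = four_block_mat (0\<^sub>m n m) X Y (0\<^sub>m m n) * Q" by simp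
  also have "\<dots> = dg X Y" unfolding Q_def dg_def using X Y
    by (subst mult_four_block_mat[of _ n m _ n _ m _ _ n _ m], auto)
  finally have eq: "dg X Y = P * dg Y X * Q" by simp
  have "dg Y X \<in> carrier_mat (n+m) (n+m)" using dg_carrier[OF Y X] by (simp add: add.commute)
  then show ?thesis using similar_matI[of "dg X Y" "dg Y X" P Q "n+m"] P Q PQ QP eq X Y by auto
qed

lemma jm_carrier: "jordan_matrix as \<in> carrier_mat (sum_list (map fst as)) (sum_list (map fst as))"
  by simp

lemma jordan_move: fixes xs ys :: "(nat \<times> 'a :: comm_ring_1) list" shows "similar_mat (jordan_matrix (xs @ b # ys)) (jordan_matrix (b # xs @ ys))"
proof (induct xs)
  case Nil
  then show ?case by (auto intro: similar_mat_refl[OF jm_carrier])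
next
  case (Cons x xs)
  obtain k e where x: "x = (k,e)" by force
  obtain k2 e2 where b: "b = (k2,e2)" by force
  let ?zs = "jordan_matrix (xs @ ys)"
  have zs: "?zs \<in> carrier_mat (sum_list (map fst (xs @ ys))) (sum_list (map fst (xs @ ys)))" by (rule jm_carrier)
  have "similar_mat (jordan_matrix ((x # xs) @ b # ys)) (dg (jordan_block k e) (jordan_matrix (b # xs @ ys)))"
    unfolding x append_Cons jordan_matrix_Cons
    by (rule dg_cong[OF similar_mat_refl[OF jordan_block_carrier] Cons])
  also have "dg (jordan_block k e) (jordan_matrix (b # xs @ ys)) = dg (dg (jordan_block k e) (jordan_block k2 e2)) ?zs"
    unfolding b jordan_matrix_Cons dg_assoc ..
  also have "similar_mat \<dots> (dg (dg (jordan_block k2 e2) (jordan_block k e)) ?zs)"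
    by (rule dg_cong[OF dg_swap[OF jordan_block_carrier jordan_block_carrier] similar_mat_refl[OF zs]])
  also have "dg (dg (jordan_block k2 e2) (jordan_block k e)) ?zs = jordan_matrix (b # (x # xs) @ ys)"
    unfolding b x append_Cons jordan_matrix_Cons dg_assoc ..
  finally show ?case .
qed

lemma jordan_perm: fixes as bs :: "(nat \<times> 'a :: comm_ring_1) list" shows "mset as = mset bs \<Longrightarrow> similar_mat (jordan_matrix as) (jordan_matrix bs)"
proof (induct as arbitrary: bs)
  case Nil
  then show ?case by (auto intro: similar_mat_refl[OF jm_carrier])
next
  case (Cons a as)
  then have "a \<in> set bs" by (metis list.set_intros(1) set_mset_mset)
  then obtain xs ys where bs: "bs = xs @ a # ys" by (metis split_list)
  obtain k e where a: "a = (k,e)" by force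
  have "mset as = mset (xs @ ys)" using Cons(2) unfolding bs by simp
  from Cons(1)[OF this] have "similar_mat (jordan_matrix (a # as)) (jordan_matrix (a # xs @ ys))"
    unfolding a jordan_matrix_Cons by (rule dg_cong[OF similar_mat_refl[OF jordan_block_carrier]])
  also have "similar_mat (jordan_matrix (a # xs @ ys)) (jordan_matrix bs)"
    unfolding bs by (rule similar_mat_sym[OF jordan_move])
  finally show ?case .
qed

lemma jnf_exists_c: assumes "(A :: complex mat) \<in> carrier_mat n n" shows "\<exists>as. jordan_nf A as"
  using char_poly_factorized[OF assms] jordan_nf_exists[OF assms] by blast

lemma cl_filter: "count_list xs x = length (filter ((=) x) xs)"
  by (induct xs) auto

lemma mset_from_dgs: assumes X: "jordan_nf X bs" and Y: "jordan_nf Y cs"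
  and eq: "dim_gen_eigenspace X = dim_gen_eigenspace Y"
  shows "mset bs = mset cs"
proof (rule multiset_eqI)
  fix x :: "nat \<times> 'a"
  obtain k e where x: "x = (k,e)" by force
  show "count (mset bs) x = count (mset cs) x"
  proof (cases "k = 0")
    case True
    then have "x \<notin> set bs" "x \<notin> set cs" using X Y unfolding jordan_nf_def x by force+
    then show ?thesis by (metis count_eq_zero_iff set_mset_mset)
  next
    case False
    have "compute_nr_of_jordan_blocks X e k = compute_nr_of_jordan_blocks Y e k"
      unfolding compute_nr_of_jordan_blocks_def eq ..
    then show ?thesis unfolding x count_mset cl_filter
      compute_nr_of_jordan_blocks[OF X False] compute_nr_of_jordan_blocks[OF Y False]
      by (metis (no_types, lifting) filter_cong)
  qed
qed

lemma sim_from_dgs: assumes X: "(X :: complex mat) \<in> carrier_mat n n" and Y: "Y \<in> carrier_mat n n"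
  and eq: "dim_gen_eigenspace X = dim_gen_eigenspace Y"
  shows "similar_mat X Y"
proof -
  obtain bs where bs: "jordan_nf X bs" using jnf_exists_c[OF X] by blast
  obtain cs where cs: "jordan_nf Y cs" using jnf_exists_c[OF Y] by blast
  have "mset bs = mset cs" by (rule mset_from_dgs[OF bs cs eq])
  from jordan_perm[OF this] bs cs show ?thesis unfolding jordan_nf_def
    using similar_mat_trans similar_mat_sym by blast
qed

definition SCR :: "complex mat \<Rightarrow> nat \<Rightarrow> bool" where
  "SCR X n \<longleftrightarrow> X \<in> carrier_mat n n \<and> (\<exists>g. g \<in> carrier_mat n n \<and> g * cm g = 1\<^sub>m n \<and> cm X * g * X = g)"

lemma SCR_similar: assumes sim: "similar_mat X Y" and SY: "SCR Y n"
  shows "SCR X n"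
proof -
  from SY obtain g where Y: "Y \<in> carrier_mat n n" and g: "g \<in> carrier_mat n n"
    and gg: "g * cm g = 1\<^sub>m n" and gY: "cm Y * g * Y = g" unfolding SCR_def by blast
  from similar_matD[OF sim] obtain n' P Q where c: "{X,Y,P,Q} \<subseteq> carrier_mat n' n'"
    and PQ: "P * Q = 1\<^sub>m n'" and QP: "Q * P = 1\<^sub>m n'" and XY: "X = P * Y * Q" by blast
  from c Y have n': "n' = n" by auto
  from c have X: "X \<in> carrier_mat n n" and P: "P \<in> carrier_mat n n" and Q: "Q \<in> carrier_mat n n"
    unfolding n' by auto
  have cPQ: "cm P * cm Q = 1\<^sub>m n" using cm_mult[OF P Q] PQ unfolding n' by simp
  have cQP: "cm Q * cm P = 1\<^sub>m n" using cm_mult[OF Q P] QP unfolding n' by simp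
  have QPZ: "\<And>Z. dim_row Z = n \<Longrightarrow> Q * (P * Z) = Z" using QP P Q unfolding n'
    by (metis assoc_mult_mat carrier_matI left_mult_one_mat')
  have cQPZ: "\<And>Z. dim_row Z = n \<Longrightarrow> cm Q * (cm P * Z) = Z" using cQP P Q
    by (metis assoc_mult_mat carrier_matI cm_carrier left_mult_one_mat')
  have gcgZ: "\<And>Z. dim_row Z = n \<Longrightarrow> g * (cm g * Z) = Z" using gg g
    by (metis assoc_mult_mat carrier_matI cm_carrier left_mult_one_mat')
  have gY': "cm Y * (g * (Y * Q)) = g * Q"
  proof -
    have "cm Y * (g * (Y * Q)) = (cm Y * g * Y) * Q" using Y g Q by simp
    then show ?thesis unfolding gY .
  qed
  define g' where "g' = cm P * g * Q"
  have g': "g' \<in> carrier_mat n n" unfolding g'_def using mult_carrier_mat[OF mult_carrier_mat[OF cm_carrier[OF P] g] Q] .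
  have cg': "cm g' = P * cm g * cm Q" unfolding g'_def
    using cm_mult[OF mult_carrier_mat[OF cm_carrier[OF P] g] Q] cm_mult[OF cm_carrier[OF P] g] by simp
  have 1: "g' * cm g' = 1\<^sub>m n" unfolding cg' unfolding g'_def using P Q g
    by (simp add: QPZ gcgZ cPQ)
  have cX: "cm X = cm P * cm Y * cm Q" unfolding XY
    using cm_mult[OF mult_carrier_mat[OF P Y] Q] cm_mult[OF P Y] by simp
  have 2: "cm X * g' * X = g'" unfolding cX unfolding g'_def XY using P Q g Y
    by (simp add: QPZ cQPZ gY')
  show ?thesis unfolding SCR_def using X g' 1 2 by blast
qed

lemma SCR_dg: assumes "SCR X n" "SCR Y m" shows "SCR (dg X Y) (n + m)"
proof -
  from assms(1) obtain g where X: "X \<in> carrier_mat n n" and g: "g \<in> carrier_mat n n"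
    and gg: "g * cm g = 1\<^sub>m n" and gX: "cm X * g * X = g" unfolding SCR_def by blast
  from assms(2) obtain h where Y: "Y \<in> carrier_mat m m" and h: "h \<in> carrier_mat m m"
    and hh: "h * cm h = 1\<^sub>m m" and hY: "cm Y * h * Y = h" unfolding SCR_def by blast
  have 1: "dg g h * cm (dg g h) = 1\<^sub>m (n + m)"
    unfolding cm_dg[OF g h] dg_mult[OF g h cm_carrier[OF g] cm_carrier[OF h]] gg hh dg_one ..
  have 2: "cm (dg X Y) * dg g h * dg X Y = dg g h"
    unfolding cm_dg[OF X Y] dg_mult[OF cm_carrier[OF X] cm_carrier[OF Y] g h]
    unfolding dg_mult[OF mult_carrier_mat[OF cm_carrier[OF X] g] mult_carrier_mat[OF cm_carrier[OF Y] h] X Y]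
    gX hY ..
  show ?thesis unfolding SCR_def using 1 2 X Y g h by (intro conjI exI[of _ "dg g h"], auto)
qed

lemma SCR_pair: assumes X: "X \<in> carrier_mat k k" and Z: "Z \<in> carrier_mat k k" and XZ: "cm X * Z = 1\<^sub>m k"
  shows "SCR (dg X Z) (k + k)"
proof -
  define g where "g = (four_block_mat (0\<^sub>m k k) (1\<^sub>m k) (1\<^sub>m k) (0\<^sub>m k k) :: complex mat)"
  have g: "g \<in> carrier_mat (k+k) (k+k)" unfolding g_def by (rule carrier_matI, auto)
  have cg: "cm g = g" unfolding g_def by (subst cm_four_block, auto)
  have gg: "g * g = 1\<^sub>m (k+k)" unfolding g_def
    by (subst mult_four_block_mat[of _ k k _ k _ k _ _ k _ k], auto)
  have ZX: "cm Z * X = 1\<^sub>m k"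
  proof -
    have "X * cm Z = 1\<^sub>m k" using cm_mult[OF cm_carrier[OF X] Z] XZ by simp
    then show ?thesis using mat_mult_left_right_inverse[OF X cm_carrier[OF Z]] by simp
  qed
  have "cm (dg X Z) * g = four_block_mat (0\<^sub>m k k) (cm X) (cm Z) (0\<^sub>m k k)"
    unfolding cm_dg[OF X Z] unfolding g_def dg_def using X Z
    by (subst mult_four_block_mat[of _ k k _ k _ k _ _ k _ k], auto)
  then have "cm (dg X Z) * g * dg X Z = four_block_mat (0\<^sub>m k k) (cm X) (cm Z) (0\<^sub>m k k) * dg X Z" by simp
  also have "\<dots> = four_block_mat (0\<^sub>m k k) (cm X * Z) (cm Z * X) (0\<^sub>m k k)"
    unfolding dg_def using X Z
    by (subst mult_four_block_mat[of _ k k _ k _ k _ _ k _ k], auto)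
  also have "\<dots> = g" unfolding XZ ZX g_def ..
  finally have 2: "cm (dg X Z) * g * dg X Z = g" .
  show ?thesis unfolding SCR_def using X Z g cg gg 2 by (intro conjI exI[of _ g], auto)
qed

lemma SCR_coninv: assumes Y: "Y \<in> carrier_mat k k" and YY: "cm Y * Y = 1\<^sub>m k"
  shows "SCR Y k"
  unfolding SCR_def using Y YY by (intro conjI exI[of _ "1\<^sub>m k"], auto)

lemma det_jb: "det (jordan_block k (a::'a::comm_ring_1)) = a ^ k"
proof -
  have ut: "upper_triangular (jordan_block k a)" unfolding upper_triangular_def by auto
  have "diag_mat (jordan_block k a) = map (\<lambda>i. a) [0..<k]" unfolding diag_mat_def by auto
  then show ?thesis using det_upper_triangular[OF ut jordan_block_carrier] by (simp add: map_replicate_const)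
qed

lemma char0: "A \<in> carrier_mat n n \<Longrightarrow> char_matrix A 0 = A"
  by (auto intro!: eq_matI simp: char_matrix_def)

lemma kdim_pow_invertible: assumes A: "(A :: 'a :: field mat) \<in> carrier_mat n n" and B: "B \<in> carrier_mat n n"
  and AB: "A * B = 1\<^sub>m n" and BA: "B * A = 1\<^sub>m n"
  shows "kernel_dim (A ^\<^sub>m j) = 0"
  by (rule kernel_dim_invertible[OF pow_carrier_mat[OF A] pow_carrier_mat[OF B] pow_inverse[OF B A BA AB]])

lemma kdim_pow_smult_J: assumes c: "(c :: 'a :: field) \<noteq> 0"
  shows "kernel_dim ((c \<cdot>\<^sub>m jordan_block k b) ^\<^sub>m j) = (if b = 0 then min j k else 0)"
proof -
  define C where "C = (c \<cdot>\<^sub>m 1\<^sub>m k :: 'a mat)"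
  define C' where "C' = (inverse c \<cdot>\<^sub>m 1\<^sub>m k :: 'a mat)"
  define J where "J = jordan_block k b"
  have J: "J \<in> carrier_mat k k" unfolding J_def by simp
  have C: "C \<in> carrier_mat k k" unfolding C_def by simp
  have C': "C' \<in> carrier_mat k k" unfolding C'_def by simp
  have CC': "C * C' = 1\<^sub>m k" unfolding C_def C'_def using c by (auto intro!: eq_matI)
  have C'C: "C' * C = 1\<^sub>m k" unfolding C_def C'_def using c by (auto intro!: eq_matI)
  have eq1: "c \<cdot>\<^sub>m J = C * J" unfolding C_def 
    using mult_smult_assoc_mat[OF one_carrier_mat J, of c] left_mult_one_mat[OF J] by simp
  have eq2: "C * J = J * C" unfolding C_def 
    using mult_smult_assoc_mat[OF one_carrier_mat J, of c] left_mult_one_mat[OF J]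
      mult_smult_distrib[OF J one_carrier_mat, of c] right_mult_one_mat[OF J] by simp
  have "kernel_dim ((c \<cdot>\<^sub>m J) ^\<^sub>m j) = kernel_dim (C ^\<^sub>m j * J ^\<^sub>m j)"
    unfolding eq1 pow_mult_comm[OF C J eq2] ..
  also have "\<dots> = kernel_dim (J ^\<^sub>m j)"
    by (rule kernel_dim_left[OF pow_carrier_mat[OF J] pow_carrier_mat[OF C] pow_carrier_mat[OF C'] pow_inverse[OF C' C C'C CC']])
  also have "\<dots> = dim_gen_eigenspace J 0 j" unfolding dim_gen_eigenspace_def char0[OF J] ..
  also have "\<dots> = (if b = 0 then min j k else 0)" unfolding J_def dgs_jordan_block by simp
  finally show ?thesis unfolding J_def .
qed

lemma block_pair: assumes mu: "mu \<noteq> 0"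
  shows "\<exists>Y. SCR Y (k + k) \<and> similar_mat (dg (jordan_block k mu) (jordan_block k (inverse (cnj mu)))) Y"
proof -
  define X where "X = jordan_block k mu"
  have X: "X \<in> carrier_mat k k" unfolding X_def by simp
  have cX: "cm X = jordan_block k (cnj mu)" unfolding X_def cm_jordan_block ..
  have "det (cm X) \<noteq> 0" unfolding cX det_jb using mu by simp
  from inv_exists[OF cm_carrier[OF X] this] obtain Z where Z: "Z \<in> carrier_mat k k"
    and XZ: "cm X * Z = 1\<^sub>m k" and ZX: "Z * cm X = 1\<^sub>m k" by blast
  have S: "SCR (dg X Z) (k + k)" by (rule SCR_pair[OF X Z XZ])
  have "dim_gen_eigenspace (jordan_block k (inverse (cnj mu))) = dim_gen_eigenspace Z"
  proof (intro ext)
    fix ev j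
    show "dim_gen_eigenspace (jordan_block k (inverse (cnj mu))) ev j = dim_gen_eigenspace Z ev j"
    proof (cases "ev = 0")
      case True
      have "dim_gen_eigenspace Z ev j = kernel_dim (Z ^\<^sub>m j)" unfolding True dim_gen_eigenspace_def char0[OF Z] ..
      also have "\<dots> = 0" by (rule kdim_pow_invertible[OF Z cm_carrier[OF X] ZX XZ])
      finally show ?thesis unfolding dgs_jordan_block using True mu by simp
    next
      case False
      have "dim_gen_eigenspace Z ev j = dim_gen_eigenspace (cm X) (inverse ev) j"
        by (rule dgs_inverse[OF cm_carrier[OF X] Z XZ ZX False])
      also have "\<dots> = (if cnj mu = inverse ev then min j k else 0)" unfolding cX dgs_jordan_block ..
      finally show ?thesis unfolding dgs_jordan_block using False mu
        by (metis inverse_inverse_eq)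
    qed
  qed
  from sim_from_dgs[OF jordan_block_carrier Z this]
  have "similar_mat (dg X (jordan_block k (inverse (cnj mu)))) (dg X Z)"
    by (rule dg_cong[OF similar_mat_refl[OF X]])
  then show ?thesis using S unfolding X_def by blast
qed

lemma block_unit: assumes lam: "lam * cnj lam = 1"
  shows "\<exists>Y. SCR Y k \<and> similar_mat (jordan_block k lam) Y"
proof -
  have lam0: "lam \<noteq> 0" using lam by auto
  define S where "S = mat k k (\<lambda>(i,j). if i = j then 1 else if Suc i = j then - \<i> else (0::complex))"
  define T where "T = cm S"
  have S: "S \<in> carrier_mat k k" unfolding S_def by simp
  have T: "T \<in> carrier_mat k k" unfolding T_def using S by simp
  have ut: "upper_triangular S" unfolding upper_triangular_def S_def by auto
  have "diag_mat S = map (\<lambda>i. 1) [0..<k]" unfolding diag_mat_def S_def by auto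
  then have "det S = 1" using det_upper_triangular[OF ut S] by (simp add: map_replicate_const)
  from inv_exists[OF S] this obtain R where R: "R \<in> carrier_mat k k"
    and SR: "S * R = 1\<^sub>m k" and RS: "R * S = 1\<^sub>m k" by auto
  have TS: "T = (2::complex) \<cdot>\<^sub>m 1\<^sub>m k + (-1) \<cdot>\<^sub>m S" unfolding T_def S_def by (auto intro!: eq_matI)
  define Y where "Y = lam \<cdot>\<^sub>m (T * R)"
  have Y: "Y \<in> carrier_mat k k" unfolding Y_def using T R by simp
  have Yeq: "Y = (2 * lam) \<cdot>\<^sub>m R + (- lam) \<cdot>\<^sub>m 1\<^sub>m k"
  proof -
    have "T * R = (2::complex) \<cdot>\<^sub>m R + (-1) \<cdot>\<^sub>m 1\<^sub>m k" unfolding TS using S R SR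
      by (simp add: add_mult_distrib_mat[of _ k k _ R k] mult_smult_assoc_mat[OF _ R] mult_smult_assoc_mat[OF one_carrier_mat R] left_mult_one_mat[OF R])
    then show ?thesis unfolding Y_def using R by (auto intro!: eq_matI simp: algebra_simps)
  qed
  have TcR: "T * cm R = 1\<^sub>m k" unfolding T_def using cm_mult[OF S R] SR by simp
  have cRT: "cm R * T = 1\<^sub>m k" using mat_mult_left_right_inverse[OF T cm_carrier[OF R] TcR] .
  have cY: "cm Y = cnj lam \<cdot>\<^sub>m (S * cm R)" unfolding Y_def cm_smult cm_mult[OF T R] unfolding T_def by simp
  have SR': "S * cm R \<in> carrier_mat k k" using S R by simp
  have TR': "T * R \<in> carrier_mat k k" using T R by simp
  have "cm Y * Y = (cnj lam \<cdot>\<^sub>m (S * cm R)) * (lam \<cdot>\<^sub>m (T * R))" unfolding cY unfolding Y_def ..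
  also have "\<dots> = cnj lam \<cdot>\<^sub>m (lam \<cdot>\<^sub>m (S * cm R * (T * R)))"
    unfolding mult_smult_assoc_mat[OF SR' smult_carrier_mat[OF TR']] mult_smult_distrib[OF SR' TR'] ..
  also have "\<dots> = (cnj lam * lam) \<cdot>\<^sub>m (S * cm R * (T * R))" by (auto intro!: eq_matI)
  finally have "cm Y * Y = (cnj lam * lam) \<cdot>\<^sub>m (S * cm R * (T * R))" .
  also have "S * cm R * (T * R) = S * ((cm R * T) * R)" using S R T by simp
  also have "\<dots> = 1\<^sub>m k" unfolding cRT using S R SR by simp
  finally have "cm Y * Y = (cnj lam * lam) \<cdot>\<^sub>m 1\<^sub>m k" .
  then have YY: "cm Y * Y = 1\<^sub>m k" using lam by (auto simp: mult.commute intro!: eq_matI)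
  have SCRY: "SCR Y k" by (rule SCR_coninv[OF Y YY])
  have "dim_gen_eigenspace (jordan_block k lam) = dim_gen_eigenspace Y"
  proof (intro ext)
    fix ev j
    define M where "M = (2 * lam) \<cdot>\<^sub>m 1\<^sub>m k + (- (lam + ev)) \<cdot>\<^sub>m S"
    have M: "M \<in> carrier_mat k k" unfolding M_def using S by simp
    have MR: "M * R = (2 * lam) \<cdot>\<^sub>m R + (- (lam + ev)) \<cdot>\<^sub>m 1\<^sub>m k" unfolding M_def using S R SR
      by (simp add: add_mult_distrib_mat[of _ k k _ R k] mult_smult_assoc_mat[OF _ R] mult_smult_assoc_mat[OF one_carrier_mat R] left_mult_one_mat[OF R])
    have RM: "R * M = (2 * lam) \<cdot>\<^sub>m R + (- (lam + ev)) \<cdot>\<^sub>m 1\<^sub>m k" unfolding M_def using S R RS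
      by (simp add: mult_add_distrib_mat[OF R smult_carrier_mat[OF one_carrier_mat] smult_carrier_mat[OF S]] mult_smult_distrib[OF R S] mult_smult_distrib[OF R one_carrier_mat] right_mult_one_mat[OF R])
    have char: "char_matrix Y ev = M * R" unfolding MR char_matrix_def Yeq using R
      by (auto intro!: eq_matI simp: algebra_simps)
    have "dim_gen_eigenspace Y ev j = kernel_dim ((M * R) ^\<^sub>m j)" unfolding dim_gen_eigenspace_def char ..
    also have "\<dots> = kernel_dim (M ^\<^sub>m j * R ^\<^sub>m j)" using pow_mult_comm[OF M R, of j] MR RM by simp
    also have "\<dots> = kernel_dim (M ^\<^sub>m j)"
      by (rule kernel_dim_right[OF pow_carrier_mat[OF M] pow_carrier_mat[OF R] pow_carrier_mat[OF S] pow_inverse[OF R S RS SR]])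
    also have "\<dots> = (if lam = ev then min j k else 0)"
    proof (cases "lam + ev = 0")
      case True
      have "M = (2 * lam) \<cdot>\<^sub>m 1\<^sub>m k" unfolding M_def True using S by (auto intro!: eq_matI)
      moreover have "((2 * lam) \<cdot>\<^sub>m 1\<^sub>m k) * (inverse (2 * lam) \<cdot>\<^sub>m 1\<^sub>m k) = (1\<^sub>m k :: complex mat)"
        using lam0 by (auto intro!: eq_matI)
      moreover have "(inverse (2 * lam) \<cdot>\<^sub>m 1\<^sub>m k) * ((2 * lam) \<cdot>\<^sub>m 1\<^sub>m k) = (1\<^sub>m k :: complex mat)"
        using lam0 by (auto intro!: eq_matI)
      ultimately have "kernel_dim (M ^\<^sub>m j) = 0"
        using kdim_pow_invertible[of "(2 * lam) \<cdot>\<^sub>m 1\<^sub>m k" k "inverse (2 * lam) \<cdot>\<^sub>m 1\<^sub>m k" j] by auto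
      moreover have "lam \<noteq> ev" using True lam0 by auto
      ultimately show ?thesis by simp
    next
      case False
      define c where "c = \<i> * (lam + ev)"
      have c: "c \<noteq> 0" unfolding c_def using False by simp
      have d1: "2 * lam + - (lam + ev) = c * ((lam - ev) / c)" using c by simp
      have d2: "- (lam + ev) * - \<i> = c" unfolding c_def by (simp add: algebra_simps)
      have "M = c \<cdot>\<^sub>m jordan_block k ((lam - ev) / c)"
      proof (rule eq_matI)
        fix i j assume i: "i < dim_row (c \<cdot>\<^sub>m jordan_block k ((lam - ev) / c))" and j: "j < dim_col (c \<cdot>\<^sub>m jordan_block k ((lam - ev) / c))"
        then have i: "i < k" and j: "j < k" by auto
        show "M $$ (i, j) = (c \<cdot>\<^sub>m jordan_block k ((lam - ev) / c)) $$ (i, j)"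
          unfolding M_def S_def using i j d1 d2 by auto
      qed (auto simp: M_def S_def)
      then have "kernel_dim (M ^\<^sub>m j) = (if (lam - ev) / c = 0 then min j k else 0)"
        using kdim_pow_smult_J[OF c] by simp
      then show ?thesis using c by simp
    qed
    finally show "dim_gen_eigenspace (jordan_block k lam) ev j = dim_gen_eigenspace Y ev j"
      unfolding dgs_jordan_block by simp
  qed
  from sim_from_dgs[OF jordan_block_carrier Y this] SCRY show ?thesis by blast
qed

definition sig :: "nat \<times> complex \<Rightarrow> nat \<times> complex" where
  "sig x = (fst x, inverse (cnj (snd x)))"

lemma sig_sig[simp]: "sig (sig x) = x"
  unfolding sig_def by auto

definition symm :: "(nat \<times> complex) multiset \<Rightarrow> bool" where
  "symm M \<longleftrightarrow> (\<forall>x. count M x = count M (sig x))"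

lemma SCR_empty: "SCR (0\<^sub>m 0 0) 0"
  unfolding SCR_def by (intro conjI exI[of _ "1\<^sub>m 0"], auto intro!: eq_matI)

lemma symm_induct:
  assumes "\<forall>x \<in> set as. fst x \<noteq> 0 \<and> snd x \<noteq> 0" and "symm (mset as)"
  shows "\<exists>Y. SCR Y (sum_list (map fst as)) \<and> similar_mat (jordan_matrix as) Y"
  using assms
proof (induct "length as" arbitrary: as rule: less_induct)
  case less
  show ?case
  proof (cases as)
    case Nil
    have "jordan_matrix as = 0\<^sub>m 0 0" unfolding Nil jordan_matrix_def by (auto intro!: eq_matI)
    then show ?thesis using SCR_empty similar_mat_refl[of "0\<^sub>m 0 0" 0] unfolding Nil by auto
  next
    case (Cons a rest)
    obtain k e where a: "a = (k,e)" by force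
    have k: "k \<noteq> 0" and e0: "e \<noteq> 0" using less(2) unfolding Cons a by auto
    have rest0: "\<forall>x \<in> set rest. fst x \<noteq> 0 \<and> snd x \<noteq> 0" using less(2) unfolding Cons by auto
    have sym: "\<And>x. count (mset as) x = count (mset as) (sig x)" using less(3) unfolding symm_def by auto
    show ?thesis
    proof (cases "sig a = a")
      case True
      have ee: "e = inverse (cnj e)" using True unfolding a sig_def by simp
      have "cnj e \<noteq> 0" using e0 by simp
      then have e: "e * cnj e = 1" by (subst ee, simp)
      have "symm (mset rest)" unfolding symm_def
      proof
        fix x
        have "count (mset rest) x = count (mset as) x - (if x = a then 1 else 0)" unfolding Cons by auto
        also have "\<dots> = count (mset as) (sig x) - (if sig x = a then 1 else 0)"
          using sym[of x] True by (metis sig_sig)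
        also have "\<dots> = count (mset rest) (sig x)" unfolding Cons by auto
        finally show "count (mset rest) x = count (mset rest) (sig x)" .
      qed
      from less(1)[of rest, OF _ rest0 this] Cons obtain Yr where
        Yr: "SCR Yr (sum_list (map fst rest))" and simr: "similar_mat (jordan_matrix rest) Yr" by auto
      from block_unit[OF e, of k] obtain Y1 where Y1: "SCR Y1 k" and sim1: "similar_mat (jordan_block k e) Y1" by auto
      have "SCR (dg Y1 Yr) (sum_list (map fst as))" using SCR_dg[OF Y1 Yr] unfolding Cons a by simp
      moreover have "similar_mat (jordan_matrix as) (dg Y1 Yr)" unfolding Cons a jordan_matrix_Cons
        by (rule dg_cong[OF sim1 simr])
      ultimately show ?thesis by blast
    next
      case False
      define f where "f = inverse (cnj e)"
      have sa: "sig a = (k,f)" unfolding a sig_def f_def by simp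
      have "count (mset as) (k,f) = count (mset as) a" using sym[of a] sa by simp
      moreover have "count (mset as) a \<ge> 1" unfolding Cons by simp
      ultimately have "count (mset rest) (k,f) \<noteq> 0" using False sa unfolding Cons by auto
      then have "(k,f) \<in> set rest" by simp
      then obtain xs ys where rest: "rest = xs @ (k,f) # ys" by (meson split_list)
      define rest' where "rest' = xs @ ys"
      have mas: "mset as = mset rest' + {#a, sig a#}" unfolding Cons rest rest'_def sa by simp
      have rest'0: "\<forall>x \<in> set rest'. fst x \<noteq> 0 \<and> snd x \<noteq> 0" using rest0 unfolding rest rest'_def by auto
      have "symm (mset rest')" unfolding symm_def
      proof
        fix x
        have "count (mset rest') x = count (mset as) x - count {#a, sig a#} x" unfolding mas by simp
        also have "count {#a, sig a#} x = count {#a, sig a#} (sig x)"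
        proof -
          have i1: "(sig x = a) = (x = sig a)" by (metis sig_sig)
          have i2: "(sig x = sig a) = (x = a)" by (metis sig_sig)
          have c2: "\<And>y b c. count {#b, c#} y = (if y = b then 1 else 0) + (if y = c then 1 else 0)" by auto
          show ?thesis unfolding c2 i1 i2 by simp
        qed
        also have "count (mset as) x = count (mset as) (sig x)" by (rule sym)
        also have "count (mset as) (sig x) - count {#a, sig a#} (sig x) = count (mset rest') (sig x)"
          unfolding mas by simp
        finally show "count (mset rest') x = count (mset rest') (sig x)" .
      qed
      from less(1)[of rest', OF _ rest'0 this] obtain Yr where
        Yr: "SCR Yr (sum_list (map fst rest'))" and simr: "similar_mat (jordan_matrix rest') Yr"
        unfolding Cons rest rest'_def by auto
      from block_pair[OF e0, of k] obtain Y2 where Y2: "SCR Y2 (k + k)"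
        and sim2: "similar_mat (dg (jordan_block k e) (jordan_block k f)) Y2" unfolding f_def by auto
      have "similar_mat (jordan_matrix as) (dg (jordan_block k e) (jordan_matrix ((k,f) # rest')))"
        unfolding Cons a jordan_matrix_Cons[of k e] rest rest'_def
        by (rule dg_cong[OF similar_mat_refl[OF jordan_block_carrier] jordan_move])
      also have "dg (jordan_block k e) (jordan_matrix ((k,f) # rest')) = dg (dg (jordan_block k e) (jordan_block k f)) (jordan_matrix rest')"
        unfolding jordan_matrix_Cons dg_assoc ..
      also have "similar_mat \<dots> (dg Y2 Yr)" by (rule dg_cong[OF sim2 simr])
      finally have "similar_mat (jordan_matrix as) (dg Y2 Yr)" .
      moreover have "SCR (dg Y2 Yr) (sum_list (map fst as))"
        using SCR_dg[OF Y2 Yr] unfolding Cons a rest rest'_def by (simp add: algebra_simps)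
      ultimately show ?thesis by blast
    qed
  qed
qed

lemma filt_cnj: "map fst [(n,e') \<leftarrow> map (\<lambda>(k,e). (k, cnj e)) as. e' = inverse e]
  = map fst [(n,e') \<leftarrow> as. e' = inverse (cnj e)]"
proof (induct as)
  case (Cons a as)
  obtain k b where a: "a = (k,b)" by force
  have "(cnj b = inverse e) = (b = inverse (cnj e))" by (metis complex_cnj_cnj complex_cnj_inverse)
  then show ?case using Cons unfolding a by simp
qed simp

lemma main_mat: fixes A h :: "complex mat"
  assumes A: "A \<in> carrier_mat n n" and Ai: "Ai \<in> carrier_mat n n" and AAi: "A * Ai = 1\<^sub>m n"
  and h: "h \<in> carrier_mat n n" and hi: "hi \<in> carrier_mat n n" and hhi: "h * hi = 1\<^sub>m n"
  and rel: "cm A * h * A = h"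
  shows "SCR A n"
proof -
  have AiA: "Ai * A = 1\<^sub>m n" by (rule mat_mult_left_right_inverse[OF A Ai AAi])
  have hih: "hi * h = 1\<^sub>m n" by (rule mat_mult_left_right_inverse[OF h hi hhi])
  define Ci where "Ci = cm Ai"
  have Ci: "Ci \<in> carrier_mat n n" unfolding Ci_def using Ai by simp
  have cA: "cm A \<in> carrier_mat n n" using A by simp
  have ACi: "cm A * Ci = 1\<^sub>m n" unfolding Ci_def using cm_mult[OF A Ai] AAi by simp
  have CiA: "Ci * cm A = 1\<^sub>m n" unfolding Ci_def using cm_mult[OF Ai A] AiA by simp
  have "Ci * (cm A * h * A) = (Ci * cm A) * (h * A)" using Ci cA h A by simp
  then have hA: "h * A = Ci * h" unfolding rel CiA using h A by simp
  have "hi * Ci * h = hi * (h * A)" unfolding hA using hi Ci h by simp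
  also have "\<dots> = (hi * h) * A" using hi h A by simp
  finally have AhCh: "A = hi * Ci * h" unfolding hih using A by simp
  have sim: "similar_mat A Ci" by (rule similar_matI[of A Ci hi h n], insert A Ci hi h hih hhi AhCh, auto)
  have dCi: "dim_gen_eigenspace A = dim_gen_eigenspace Ci" by (rule dim_gen_eigenspace_similar[OF sim])
  obtain as where jnf: "jordan_nf A as" using jnf_exists_c[OF A] by blast
  define bs where "bs = map (\<lambda>(k,e). (k, cnj e)) as"
  have simJ: "similar_mat A (jordan_matrix as)" using jnf unfolding jordan_nf_def by simp
  have "similar_mat (cm A) (jordan_matrix bs)" unfolding bs_def cm_jordan_matrix[symmetric]
    by (rule similar_mat_cm[OF simJ])
  then have dcA: "dim_gen_eigenspace (cm A) = dim_gen_eigenspace (jordan_matrix bs)"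
    by (rule dim_gen_eigenspace_similar)
  have cnt: "\<And>k e. k \<noteq> 0 \<Longrightarrow> count (mset as) (k,e) = compute_nr_of_jordan_blocks A e k"
    unfolding count_mset cl_filter using compute_nr_of_jordan_blocks[OF jnf] by simp
  have dA0: "\<And>j. dim_gen_eigenspace A 0 j = 0"
    unfolding dim_gen_eigenspace_def char0[OF A] by (rule kdim_pow_invertible[OF A Ai AAi AiA])
  have nz: "\<forall>x \<in> set as. fst x \<noteq> 0 \<and> snd x \<noteq> 0"
  proof
    fix x assume x: "x \<in> set as"
    obtain k e where xe: "x = (k,e)" by force
    have k: "k \<noteq> 0" using jnf x unfolding jordan_nf_def xe by force
    have "count (mset as) (k,e) \<noteq> 0" using x xe by simp
    moreover have "e = 0 \<Longrightarrow> count (mset as) (k,e) = 0"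
      unfolding cnt[OF k] compute_nr_of_jordan_blocks_def using dA0 by simp
    ultimately show "fst x \<noteq> 0 \<and> snd x \<noteq> 0" using k xe by auto
  qed
  have symm: "symm (mset as)" unfolding symm_def
  proof
    fix x :: "nat \<times> complex"
    obtain k e where xe: "x = (k,e)" by force
    show "count (mset as) x = count (mset as) (sig x)"
    proof (cases "k = 0")
      case True
      then have "x \<notin> set as" "sig x \<notin> set as" using nz unfolding xe sig_def by auto
      then have "count (mset as) x = 0" "count (mset as) (sig x) = 0" using count_mset_0_iff by metis+
      then show ?thesis by (simp only:)
    next
      case k: False
      show ?thesis
      proof (cases "e = 0")
        case True
        then show ?thesis unfolding xe sig_def by simp
      next
        case e: False
        have eq: "dim_gen_eigenspace Ci e = dim_gen_eigenspace A (inverse (cnj e))"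
        proof
          fix j
          have "dim_gen_eigenspace Ci e j = dim_gen_eigenspace (cm A) (inverse e) j"
            by (rule dgs_inverse[OF cA Ci ACi CiA e])
          also have "\<dots> = dim_gen_eigenspace (jordan_matrix bs) (inverse e) j" unfolding dcA ..
          also have "\<dots> = dim_gen_eigenspace A (inverse (cnj e)) j"
            unfolding dim_gen_eigenspace_jordan_matrix dim_gen_eigenspace[OF jnf] bs_def filt_cnj ..
          finally show "dim_gen_eigenspace Ci e j = dim_gen_eigenspace A (inverse (cnj e)) j" .
        qed
        have "count (mset as) x = compute_nr_of_jordan_blocks A e k" unfolding xe cnt[OF k] ..
        also have "\<dots> = compute_nr_of_jordan_blocks A (inverse (cnj e)) k"
          unfolding compute_nr_of_jordan_blocks_def dCi eq ..
        also have "\<dots> = count (mset as) (sig x)" unfolding xe sig_def using cnt[OF k] by simp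
        finally show ?thesis .
      qed
    qed
  qed
  from symm_induct[OF nz symm] obtain Y where Y: "SCR Y (sum_list (map fst as))"
    and simY: "similar_mat (jordan_matrix as) Y" by blast
  from similar_matD[OF simJ] obtain n' where "A \<in> carrier_mat n' n'" "jordan_matrix as \<in> carrier_mat n' n'" by blast
  then have "n' = n" "dim_row (jordan_matrix as) = n'" using A by auto
  then have sz: "sum_list (map fst as) = n" by simp
  have "similar_mat A Y" using similar_mat_trans[OF simJ simY] .
  from SCR_similar[OF this] Y sz show ?thesis by simp
qed

definition idx :: "'n::finite \<Rightarrow> nat" where
  "idx = (SOME f. bij_betw f (UNIV :: 'n set) {0..<CARD('n)})"

lemma idx_bij: "bij_betw (idx :: 'n::finite \<Rightarrow> nat) UNIV {0..<CARD('n)}"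
proof -
  have "\<exists>f. bij_betw f (UNIV :: 'n set) {0..<CARD('n)}" using ex_bij_betw_finite_nat[of "UNIV :: 'n set"] by simp
  then show ?thesis unfolding idx_def by (rule someI_ex)
qed

definition uidx :: "nat \<Rightarrow> 'n::finite" where "uidx = inv_into UNIV idx"

lemma uidx_bij: "bij_betw (uidx :: nat \<Rightarrow> 'n::finite) {0..<CARD('n)} UNIV"
  unfolding uidx_def by (rule bij_betw_inv_into[OF idx_bij])

lemma uidx_idx[simp]: "uidx (idx (i :: 'n::finite)) = i"
  unfolding uidx_def by (meson bij_betw_imp_inj_on idx_bij inv_into_f_f iso_tuple_UNIV_I)

lemma idx_uidx[simp]: "j < CARD('n::finite) \<Longrightarrow> idx (uidx j :: 'n) = j"
  unfolding uidx_def using idx_bij[where 'n='n]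
  by (metis atLeastLessThan_iff bij_betw_def f_inv_into_f zero_le)

lemma idx_less[simp]: "idx (i :: 'n::finite) < CARD('n)"
  using idx_bij[where 'n='n] unfolding bij_betw_def by auto

definition to_m :: "complex^'n^'n \<Rightarrow> complex mat" where
  "to_m A = mat CARD('n) CARD('n) (\<lambda>(i,j). A $ uidx i $ uidx j)"

definition from_m :: "complex mat \<Rightarrow> complex^'n^'n" where
  "from_m M = (\<chi> i j. M $$ (idx i, idx j))"

lemma to_m_carrier[simp]: "to_m (A :: complex^'n^'n) \<in> carrier_mat CARD('n) CARD('n)"
  unfolding to_m_def by simp

lemma from_to_m[simp]: "from_m (to_m A) = A"
  unfolding from_m_def to_m_def by (simp add: vec_eq_iff)

lemma to_m_inj: "to_m (A :: complex^'n^'n) = to_m B \<Longrightarrow> A = B"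
  by (metis from_to_m)

lemma to_from_m: "M \<in> carrier_mat CARD('n) CARD('n) \<Longrightarrow> to_m (from_m M :: complex^'n^'n) = M"
  unfolding from_m_def to_m_def by (auto intro!: eq_matI)

lemma to_m_mult: "to_m ((A :: complex^'n^'n) ** B) = to_m A * to_m B"
proof (rule eq_matI)
  fix i j assume i: "i < dim_row (to_m A * to_m B)" and j: "j < dim_col (to_m A * to_m B)"
  then have i: "i < CARD('n)" and j: "j < CARD('n)" by (auto simp: to_m_def)
  have "(to_m A * to_m B) $$ (i,j) = (\<Sum>l\<in>{0..<CARD('n)}. A $ uidx i $ uidx l * B $ uidx l $ uidx j)"
    using i j by (simp add: to_m_def scalar_prod_def)
  also have "\<dots> = (\<Sum>k\<in>UNIV. A $ uidx i $ k * B $ k $ uidx j)"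
    by (rule sum.reindex_bij_betw[OF uidx_bij, where g = "\<lambda>k. A $ uidx i $ k * B $ k $ uidx j"])
  also have "\<dots> = to_m (A ** B) $$ (i,j)"
    using i j by (simp add: to_m_def matrix_matrix_mult_def)
  finally show "to_m (A ** B) $$ (i,j) = (to_m A * to_m B) $$ (i,j)" by simp
qed (auto simp: to_m_def)

lemma to_m_one: "to_m (Finite_Cartesian_Product.mat 1 :: complex^'n^'n) = 1\<^sub>m CARD('n)"
proof (rule eq_matI)
  fix i j assume "i < dim_row (1\<^sub>m CARD('n) :: complex mat)" "j < dim_col (1\<^sub>m CARD('n) :: complex mat)"
  then have i: "i < CARD('n)" and j: "j < CARD('n)" by auto
  have "(uidx i :: 'n) = uidx j \<longleftrightarrow> i = j" using i j by (metis idx_uidx)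
  then show "to_m (Finite_Cartesian_Product.mat 1 :: complex^'n^'n) $$ (i,j) = 1\<^sub>m CARD('n) $$ (i,j)"
    using i j by (simp add: to_m_def Finite_Cartesian_Product.mat_def)
qed (auto simp: to_m_def)

lemma to_m_conj: "to_m (conj_mat (A :: complex^'n^'n)) = cm (to_m A)"
  unfolding to_m_def conj_mat_def cm_def by (auto intro!: eq_matI)

definition smat :: "complex \<Rightarrow> complex^'n^'n \<Rightarrow> complex^'n^'n" where
  "smat c A = (\<chi> i j. c * A $ i $ j)"

lemma conj_mult: "conj_mat ((A :: complex^'n^'n) ** B) = conj_mat A ** conj_mat B"
  by (simp add: conj_mat_def matrix_matrix_mult_def vec_eq_iff)

lemma conj_one: "conj_mat (Finite_Cartesian_Product.mat 1 :: complex^'n^'n) = Finite_Cartesian_Product.mat 1"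
proof -
  have "\<And>i j. (conj_mat (Finite_Cartesian_Product.mat 1 :: complex^'n^'n) $ i) $ j = ((Finite_Cartesian_Product.mat 1 :: complex^'n^'n) $ i) $ j"
    subgoal for i j by (cases "i = j") (simp_all add: conj_mat_def Finite_Cartesian_Product.mat_def)
    done
  then show ?thesis by (simp add: Finite_Cartesian_Product.vec_eq_iff)
qed

lemma det_conj: "Determinants.det (conj_mat (A :: complex^'n^'n)) = cnj (Determinants.det A)"
  by (simp add: Determinants.det_def conj_mat_def)

lemma smat_mult_left: "smat c A ** B = smat c ((A :: complex^'n^'n) ** B)"
  by (simp add: smat_def matrix_matrix_mult_def vec_eq_iff sum_distrib_left mult.assoc)

lemma smat_mult_right: "A ** smat c B = smat c ((A :: complex^'n^'n) ** B)"
  by (simp add: smat_def matrix_matrix_mult_def vec_eq_iff sum_distrib_left mult.left_commute)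

lemma conj_smat: "conj_mat (smat c A) = smat (cnj c) (conj_mat (A :: complex^'n^'n))"
  by (simp add: smat_def conj_mat_def vec_eq_iff)

lemma smat_smat: "smat a (smat b A) = smat (a * b) (A :: complex^'n^'n)"
  by (simp add: smat_def vec_eq_iff mult.assoc)

lemma smat_1: "smat 1 A = (A :: complex^'n^'n)"
  by (simp add: smat_def vec_eq_iff)

lemma det_smat: "Determinants.det (smat c (A :: complex^'n^'n)) = c ^ CARD('n) * Determinants.det A"
proof -
  have "\<And>p. (\<Prod>i\<in>UNIV. c * A $ i $ p i) = c ^ CARD('n) * (\<Prod>i\<in>UNIV. A $ i $ p i)"
    by (simp add: prod.distrib)
  then show ?thesis unfolding Determinants.det_def smat_def
    by (simp add: sum_distrib_left mult.left_commute)
qed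

lemma matrix_inv_eq: assumes "(A :: complex^'n^'n) ** B = Finite_Cartesian_Product.mat 1"
  and "B ** A = Finite_Cartesian_Product.mat 1"
  shows "matrix_inv A = B"
proof -
  have "\<exists>A'. A ** A' = Finite_Cartesian_Product.mat 1 \<and> A' ** A = Finite_Cartesian_Product.mat 1" using assms by blast
  then have A': "A ** matrix_inv A = Finite_Cartesian_Product.mat 1" "matrix_inv A ** A = Finite_Cartesian_Product.mat 1"
    unfolding matrix_inv_def by (metis (mono_tags, lifting) someI_ex)+
  have "matrix_inv A = matrix_inv A ** (A ** B)" using assms by simp
  also have "\<dots> = B" by (simp add: matrix_mul_assoc A')
  finally show ?thesis .
qed

lemma matrix_inv_props: assumes "Determinants.det (A :: complex^'n^'n) \<noteq> 0"
  shows "A ** matrix_inv A = Finite_Cartesian_Product.mat 1" "matrix_inv A ** A = Finite_Cartesian_Product.mat 1"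
proof -
  have "invertible A" using assms invertible_det_nz by blast
  then have "\<exists>A'. A ** A' = Finite_Cartesian_Product.mat 1 \<and> A' ** A = Finite_Cartesian_Product.mat 1"
    unfolding invertible_def by blast
  then show "A ** matrix_inv A = Finite_Cartesian_Product.mat 1" "matrix_inv A ** A = Finite_Cartesian_Product.mat 1"
    unfolding matrix_inv_def by (metis (mono_tags, lifting) someI_ex)+
qed

lemma root_unit: assumes d: "d * cnj d = 1" and n: "(n::nat) > 0"
  shows "\<exists>c. c ^ n = cnj d \<and> c * cnj c = 1"
proof -
  have d0: "cnj d \<noteq> 0" using d by auto
  define c where "c = exp (ln (cnj d) / of_nat n)"
  have "c ^ n = exp (of_nat n * (ln (cnj d) / of_nat n))" unfolding c_def exp_of_nat_mult ..
  also have "\<dots> = cnj d" using n d0 by simp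
  finally have cn: "c ^ n = cnj d" .
  have "norm d ^ 2 = 1" using d complex_norm_square[of d] by (metis of_real_eq_1_iff)
  then have "norm d = 1 \<or> norm d = -1" by (simp add: power2_eq_1_iff)
  then have nd: "norm d = 1" using norm_ge_zero[of d] by linarith
  have "norm c ^ n = 1" using cn nd by (metis complex_mod_cnj norm_power)
  then have "norm c = 1" using power_eq_imp_eq_base[of "cmod c" n 1] n by simp
  then have "c * cnj c = 1" using complex_norm_square[of c] by simp
  with cn show ?thesis by blast
qed

theorem theorem1p2:
  fixes A :: "complex^'n^'n"
  assumes "A \<in> SL"
  shows "c_reversible A \<longleftrightarrow> strongly_c_reversible A"
proof
  assume "strongly_c_reversible A"
  then show "c_reversible A" unfolding c_reversible_def strongly_c_reversible_def by blast
next
  assume "c_reversible A"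
  then obtain h where hSL: "h \<in> SL" and heq: "h ** A ** matrix_inv h = matrix_inv (conj_mat A)"
    unfolding c_reversible_def by blast
  let ?I = "Finite_Cartesian_Product.mat 1 :: complex^'n^'n"
  have dA: "Determinants.det A = 1" using assms unfolding SL_def by simp
  have dh: "Determinants.det h = 1" using hSL unfolding SL_def by simp
  define Ai where "Ai = matrix_inv A"
  define hi where "hi = matrix_inv h"
  have AAi: "A ** Ai = ?I" "Ai ** A = ?I" unfolding Ai_def using matrix_inv_props[of A] dA by auto
  have hhi: "h ** hi = ?I" "hi ** h = ?I" unfolding hi_def using matrix_inv_props[of h] dh by auto
  define cAi where "cAi = conj_mat Ai"
  have cA1: "conj_mat A ** cAi = ?I" unfolding cAi_def conj_mult[symmetric] AAi conj_one ..
  have cA2: "cAi ** conj_mat A = ?I" unfolding cAi_def conj_mult[symmetric] AAi conj_one ..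
  have icA: "matrix_inv (conj_mat A) = cAi" by (rule matrix_inv_eq[OF cA1 cA2])
  have heq': "h ** A ** hi = cAi" using heq unfolding icA hi_def .
  have rel: "conj_mat A ** h ** A = h"
  proof -
    have "conj_mat A ** (h ** A ** hi) ** h = conj_mat A ** cAi ** h" unfolding heq' ..
    also have "\<dots> = h" unfolding cA1 by simp
    finally have "conj_mat A ** (h ** A ** hi) ** h = h" .
    moreover have "conj_mat A ** (h ** A ** hi) ** h = conj_mat A ** h ** A ** (hi ** h)"
      by (simp add: matrix_mul_assoc)
    ultimately show ?thesis unfolding hhi by simp
  qed
  have m1: "to_m A * to_m Ai = 1\<^sub>m CARD('n)" using AAi(1) to_m_mult[of A Ai] to_m_one by metis
  have m2: "to_m h * to_m hi = 1\<^sub>m CARD('n)" using hhi(1) to_m_mult[of h hi] to_m_one by metis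
  have m3: "cm (to_m A) * to_m h * to_m A = to_m h"
    using rel to_m_mult to_m_conj by metis
  have "SCR (to_m A) CARD('n)"
    by (rule main_mat[OF to_m_carrier to_m_carrier m1 to_m_carrier to_m_carrier m2 m3])
  then obtain gm where gm: "gm \<in> carrier_mat CARD('n) CARD('n)" and gg: "gm * cm gm = 1\<^sub>m CARD('n)"
    and gA: "cm (to_m A) * gm * to_m A = gm" unfolding SCR_def by blast
  define g :: "complex^'n^'n" where "g = from_m gm"
  have tg: "to_m g = gm" unfolding g_def by (rule to_from_m[OF gm])
  have gcg: "g ** conj_mat g = ?I"
    by (rule to_m_inj) (simp add: to_m_mult to_m_conj tg gg to_m_one)
  have cAg: "conj_mat A ** g ** A = g"
    by (rule to_m_inj) (simp add: to_m_mult to_m_conj tg gA)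
  define d where "d = Determinants.det g"
  have "d * cnj d = 1" unfolding d_def det_conj[symmetric] det_mul[symmetric] gcg by simp
  from root_unit[OF this, of "CARD('n)"] obtain c where c1: "c ^ CARD('n) = cnj d" and c2: "c * cnj c = 1"
    by auto
  define g' where "g' = smat c g"
  have dg': "Determinants.det g' = 1" unfolding g'_def det_smat c1 d_def[symmetric]
    using \<open>d * cnj d = 1\<close> by (simp add: mult.commute)
  have g'g': "g' ** conj_mat g' = ?I" unfolding g'_def conj_smat smat_mult_left smat_mult_right smat_smat gcg
    using c2 by (simp add: smat_1 mult.commute)
  have cAg': "conj_mat A ** g' ** A = g'" unfolding g'_def smat_mult_left smat_mult_right
    using cAg by (simp add: matrix_mul_assoc)
  define gi where "gi = matrix_inv g'"
  have ggi: "g' ** gi = ?I" "gi ** g' = ?I" unfolding gi_def using matrix_inv_props[of g'] dg' by auto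
  have "g' ** A ** gi = cAi ** (conj_mat A ** g' ** A) ** gi"
    by (simp add: matrix_mul_assoc cA2)
  also have "\<dots> = cAi" unfolding cAg' by (simp add: matrix_mul_assoc[symmetric] ggi)
  finally have "g' ** A ** matrix_inv g' = matrix_inv (conj_mat A)" unfolding icA gi_def .
  moreover have "g' \<in> SL" unfolding SL_def using dg' by simp
  ultimately show "strongly_c_reversible A" unfolding strongly_c_reversible_def using g'g' by blast
qed

end
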